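(* For any collective choice problem satisfying the standing assumptions in the context, an equilibrium exists in the game with private signals. In the public information benchmark, in which every voter observes the entire signal profile $s$ before voting, an equilibrium exists and it is unique.
   Context: Let $n\ge3$ be odd, $\mathcal N=\{1,\dots,n\}$, $\tau=(n-1)/2$; voters vote for $p^*$ or $p_*$ and a policy wins iff it gets strictly more than $\tau$ votes. Finite payoff sets $\mathcal V^{p^*},\mathcal V^{p_*}\subset\mathbb R$, signal set $\mathcal S=\{s^0,\dots,s^K\}$, $\mathcal M=\{s^1,\dots,s^K\}$, state space $\Omega=(\mathcal V^{p^*}\times\mathcal V^{p_*})^n\times\mathcal S^n$ with probability $P$; $V_i^d=V_i^{p^*}-V_i^{p_*}$; $V_i^d(E)=E_P[V_i^d\mid E]$ if $P(E)>0$, $0$ otherwise. $s^k\in\mathcal M$ is good news if $V_i^d(S_i=s^k)>0$, bad news if $<0$; $G,B$ count voters with good/bad news. Standing assumptions: $V_i^d(\Omega)>0$; $P$ invariant under permutations of voters; if $s_i=s^0$ then $P(V=v,S=s)=P(V=v,S_{-i}=s_{-i})P(S_i=s^0)$; if $s_i\ne s^0$ then $V_i^d(S=s)>0$ iff $V_i^d(S_i=s_i)>0$; $V_i^d(E)\ne0$ for all $i$ and non-null $E$; $P(B\ge1)>0$ and $P(G\ge\tau)>0$. With private signals, voter $i$ observes only $s_i$ and a strategy is $\sigma_i:\mathcal S\to[0,1]$; with public information, a strategy is $\phi_i:\mathcal S^n\to[0,1]$. "Equilibrium" means Bayes–Nash equilibrium in weakly undominated strategies. *)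

theory Defs
  imports Complex_Main "HOL-Library.FuncSet" "HOL-Combinatorics.Permutations"
begin

text \<open>Signals s^0, ..., s^K are encoded as the numbers 0..K (s^0 = 0).
A state is a pair (v, s): v i = (V_i^{p*}, V_i^{p_*}) and s i is the signal index of voter i.
Both components are extensional (undefined outside the voters) so the state space is finite.\<close>

type_synonym state = "(nat \<Rightarrow> real \<times> real) \<times> (nat \<Rightarrow> nat)"

definition voters :: "nat \<Rightarrow> nat set" where
  "voters n = {1..n}"

definition tau :: "nat \<Rightarrow> nat" where
  "tau n = (n - 1) div 2"

definition profiles :: "nat \<Rightarrow> nat \<Rightarrow> (nat \<Rightarrow> nat) set" where
  "profiles n K = PiE {1..n} (\<lambda>_. {0..K})"

definition Omega :: "nat \<Rightarrow> nat \<Rightarrow> real set \<Rightarrow> real set \<Rightarrow> state set" where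
  "Omega n K Vs Vl = {(v, s). v \<in> PiE {1..n} (\<lambda>_. Vs \<times> Vl) \<and> s \<in> profiles n K}"

definition Pr :: "state set \<Rightarrow> (state \<Rightarrow> real) \<Rightarrow> state set \<Rightarrow> real" where
  "Pr \<Omega> P E = (\<Sum>\<omega>\<in>E \<inter> \<Omega>. P \<omega>)"

definition Vd :: "nat \<Rightarrow> state \<Rightarrow> real" where
  "Vd i \<omega> = fst (fst \<omega> i) - snd (fst \<omega> i)"

definition VdE :: "state set \<Rightarrow> (state \<Rightarrow> real) \<Rightarrow> nat \<Rightarrow> state set \<Rightarrow> real" where
  "VdE \<Omega> P i E = (if Pr \<Omega> P E > 0
      then (\<Sum>\<omega>\<in>E \<inter> \<Omega>. P \<omega> * Vd i \<omega>) / Pr \<Omega> P E else 0)"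

definition sig_event :: "state set \<Rightarrow> nat \<Rightarrow> nat \<Rightarrow> state set" where
  "sig_event \<Omega> i k = {\<omega> \<in> \<Omega>. snd \<omega> i = k}"

definition prof_event :: "state set \<Rightarrow> (nat \<Rightarrow> nat) \<Rightarrow> state set" where
  "prof_event \<Omega> s = {\<omega> \<in> \<Omega>. snd \<omega> = s}"

definition good_news :: "state set \<Rightarrow> (state \<Rightarrow> real) \<Rightarrow> nat \<Rightarrow> nat \<Rightarrow> bool" where
  "good_news \<Omega> P i k \<longleftrightarrow> k \<noteq> 0 \<and> VdE \<Omega> P i (sig_event \<Omega> i k) > 0"

definition bad_news :: "state set \<Rightarrow> (state \<Rightarrow> real) \<Rightarrow> nat \<Rightarrow> nat \<Rightarrow> bool" where
  "bad_news \<Omega> P i k \<longleftrightarrow> k \<noteq> 0 \<and> VdE \<Omega> P i (sig_event \<Omega> i k) < 0"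

definition Gcount :: "nat \<Rightarrow> state set \<Rightarrow> (state \<Rightarrow> real) \<Rightarrow> state \<Rightarrow> nat" where
  "Gcount n \<Omega> P \<omega> = card {i \<in> voters n. good_news \<Omega> P i (snd \<omega> i)}"

definition Bcount :: "nat \<Rightarrow> state set \<Rightarrow> (state \<Rightarrow> real) \<Rightarrow> state \<Rightarrow> nat" where
  "Bcount n \<Omega> P \<omega> = card {i \<in> voters n. bad_news \<Omega> P i (snd \<omega> i)}"

definition standing_assumptions ::
  "nat \<Rightarrow> nat \<Rightarrow> real set \<Rightarrow> real set \<Rightarrow> (state \<Rightarrow> real) \<Rightarrow> bool" where
  "standing_assumptions n K Vs Vl P \<longleftrightarrow>
     (let \<Omega> = Omega n K Vs Vl in
       odd n \<and> n \<ge> 3 \<and> finite Vs \<and> finite Vl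
     \<and> (\<forall>\<omega>\<in>\<Omega>. P \<omega> \<ge> 0) \<and> (\<Sum>\<omega>\<in>\<Omega>. P \<omega>) = 1
     \<comment> \<open>V_i^d(\<Omega>) > 0\<close>
     \<and> (\<forall>i\<in>voters n. VdE \<Omega> P i \<Omega> > 0)
     \<comment> \<open>P is invariant under permutations of the voters\<close>
     \<and> (\<forall>\<pi>. \<pi> permutes voters n \<longrightarrow>
           (\<forall>v s. (v, s) \<in> \<Omega> \<longrightarrow> P (v \<circ> \<pi>, s \<circ> \<pi>) = P (v, s)))
     \<comment> \<open>the signal s^0 is independent of everything else\<close>
     \<and> (\<forall>i\<in>voters n. \<forall>v s. (v, s) \<in> \<Omega> \<longrightarrow> s i = 0 \<longrightarrow>
           P (v, s) = (\<Sum>t\<in>{0..K}. P (v, s(i := t))) * Pr \<Omega> P (sig_event \<Omega> i 0))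
     \<comment> \<open>if s_i \<noteq> s^0 then V_i^d(S = s) > 0 iff V_i^d(S_i = s_i) > 0\<close>
     \<and> (\<forall>i\<in>voters n. \<forall>s\<in>profiles n K. s i \<noteq> 0 \<longrightarrow>
           (VdE \<Omega> P i (prof_event \<Omega> s) > 0 \<longleftrightarrow> VdE \<Omega> P i (sig_event \<Omega> i (s i)) > 0))
     \<comment> \<open>V_i^d(E) \<noteq> 0 for all non-null events E\<close>
     \<and> (\<forall>i\<in>voters n. \<forall>E. E \<subseteq> \<Omega> \<longrightarrow> Pr \<Omega> P E > 0 \<longrightarrow> VdE \<Omega> P i E \<noteq> 0)
     \<comment> \<open>P(B \<ge> 1) > 0 and P(G \<ge> tau) > 0\<close>
     \<and> Pr \<Omega> P {\<omega> \<in> \<Omega>. Bcount n \<Omega> P \<omega> \<ge> 1} > 0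
     \<and> Pr \<Omega> P {\<omega> \<in> \<Omega>. Gcount n \<Omega> P \<omega> \<ge> tau n} > 0)"

definition win_prob :: "nat \<Rightarrow> (nat \<Rightarrow> real) \<Rightarrow> real" where
  "win_prob n q = (\<Sum>A\<in>{A. A \<subseteq> voters n \<and> card A > tau n}.
       (\<Prod>j\<in>A. q j) * (\<Prod>j\<in>voters n - A. 1 - q j))"

definition EU :: "nat \<Rightarrow> nat \<Rightarrow> real set \<Rightarrow> real set \<Rightarrow> (state \<Rightarrow> real) \<Rightarrow> nat
    \<Rightarrow> (nat \<Rightarrow> state \<Rightarrow> real) \<Rightarrow> real" where
  "EU n K Vs Vl P i beh = (\<Sum>\<omega>\<in>Omega n K Vs Vl. P \<omega> *
      (win_prob n (\<lambda>j. beh j \<omega>) * fst (fst \<omega> i)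
       + (1 - win_prob n (\<lambda>j. beh j \<omega>)) * snd (fst \<omega> i)))"

definition valid_sig_strategy :: "nat \<Rightarrow> (nat \<Rightarrow> real) \<Rightarrow> bool" where
  "valid_sig_strategy K f \<longleftrightarrow> (\<forall>k\<in>{0..K}. 0 \<le> f k \<and> f k \<le> 1)"

definition valid_priv_profile :: "nat \<Rightarrow> nat \<Rightarrow> (nat \<Rightarrow> nat \<Rightarrow> real) \<Rightarrow> bool" where
  "valid_priv_profile n K \<sigma> \<longleftrightarrow> (\<forall>i\<in>voters n. valid_sig_strategy K (\<sigma> i))"

definition priv_beh :: "(nat \<Rightarrow> nat \<Rightarrow> real) \<Rightarrow> nat \<Rightarrow> state \<Rightarrow> real" where
  "priv_beh \<sigma> j \<omega> = \<sigma> j (snd \<omega> j)"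

definition BNE_priv :: "nat \<Rightarrow> nat \<Rightarrow> real set \<Rightarrow> real set \<Rightarrow> (state \<Rightarrow> real)
    \<Rightarrow> (nat \<Rightarrow> nat \<Rightarrow> real) \<Rightarrow> bool" where
  "BNE_priv n K Vs Vl P \<sigma> \<longleftrightarrow> valid_priv_profile n K \<sigma> \<and>
     (\<forall>i\<in>voters n. \<forall>f. valid_sig_strategy K f \<longrightarrow>
        EU n K Vs Vl P i (priv_beh (\<sigma>(i := f))) \<le> EU n K Vs Vl P i (priv_beh \<sigma>))"

definition weakly_dominated_priv :: "nat \<Rightarrow> nat \<Rightarrow> real set \<Rightarrow> real set \<Rightarrow> (state \<Rightarrow> real)
    \<Rightarrow> nat \<Rightarrow> (nat \<Rightarrow> real) \<Rightarrow> bool" where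
  "weakly_dominated_priv n K Vs Vl P i f \<longleftrightarrow>
     (\<exists>g. valid_sig_strategy K g \<and>
        (\<forall>\<sigma>. valid_priv_profile n K \<sigma> \<longrightarrow>
            EU n K Vs Vl P i (priv_beh (\<sigma>(i := f))) \<le> EU n K Vs Vl P i (priv_beh (\<sigma>(i := g)))) \<and>
        (\<exists>\<sigma>. valid_priv_profile n K \<sigma> \<and>
            EU n K Vs Vl P i (priv_beh (\<sigma>(i := f))) < EU n K Vs Vl P i (priv_beh (\<sigma>(i := g)))))"

definition equilibrium_priv :: "nat \<Rightarrow> nat \<Rightarrow> real set \<Rightarrow> real set \<Rightarrow> (state \<Rightarrow> real)
    \<Rightarrow> (nat \<Rightarrow> nat \<Rightarrow> real) \<Rightarrow> bool" where
  "equilibrium_priv n K Vs Vl P \<sigma> \<longleftrightarrow> BNE_priv n K Vs Vl P \<sigma> \<and>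
     (\<forall>i\<in>voters n. \<not> weakly_dominated_priv n K Vs Vl P i (\<sigma> i))"

definition valid_pub_strategy :: "nat \<Rightarrow> nat \<Rightarrow> ((nat \<Rightarrow> nat) \<Rightarrow> real) \<Rightarrow> bool" where
  "valid_pub_strategy n K f \<longleftrightarrow> (\<forall>s\<in>profiles n K. 0 \<le> f s \<and> f s \<le> 1)"

definition valid_pub_profile :: "nat \<Rightarrow> nat \<Rightarrow> (nat \<Rightarrow> (nat \<Rightarrow> nat) \<Rightarrow> real) \<Rightarrow> bool" where
  "valid_pub_profile n K \<phi> \<longleftrightarrow> (\<forall>i\<in>voters n. valid_pub_strategy n K (\<phi> i))"

definition pub_beh :: "(nat \<Rightarrow> (nat \<Rightarrow> nat) \<Rightarrow> real) \<Rightarrow> nat \<Rightarrow> state \<Rightarrow> real" where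
  "pub_beh \<phi> j \<omega> = \<phi> j (snd \<omega>)"

definition BNE_pub :: "nat \<Rightarrow> nat \<Rightarrow> real set \<Rightarrow> real set \<Rightarrow> (state \<Rightarrow> real)
    \<Rightarrow> (nat \<Rightarrow> (nat \<Rightarrow> nat) \<Rightarrow> real) \<Rightarrow> bool" where
  "BNE_pub n K Vs Vl P \<phi> \<longleftrightarrow> valid_pub_profile n K \<phi> \<and>
     (\<forall>i\<in>voters n. \<forall>f. valid_pub_strategy n K f \<longrightarrow>
        EU n K Vs Vl P i (pub_beh (\<phi>(i := f))) \<le> EU n K Vs Vl P i (pub_beh \<phi>))"

definition weakly_dominated_pub :: "nat \<Rightarrow> nat \<Rightarrow> real set \<Rightarrow> real set \<Rightarrow> (state \<Rightarrow> real)
    \<Rightarrow> nat \<Rightarrow> ((nat \<Rightarrow> nat) \<Rightarrow> real) \<Rightarrow> bool" where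
  "weakly_dominated_pub n K Vs Vl P i f \<longleftrightarrow>
     (\<exists>g. valid_pub_strategy n K g \<and>
        (\<forall>\<phi>. valid_pub_profile n K \<phi> \<longrightarrow>
            EU n K Vs Vl P i (pub_beh (\<phi>(i := f))) \<le> EU n K Vs Vl P i (pub_beh (\<phi>(i := g)))) \<and>
        (\<exists>\<phi>. valid_pub_profile n K \<phi> \<and>
            EU n K Vs Vl P i (pub_beh (\<phi>(i := f))) < EU n K Vs Vl P i (pub_beh (\<phi>(i := g)))))"

definition equilibrium_pub :: "nat \<Rightarrow> nat \<Rightarrow> real set \<Rightarrow> real set \<Rightarrow> (state \<Rightarrow> real)
    \<Rightarrow> (nat \<Rightarrow> (nat \<Rightarrow> nat) \<Rightarrow> real) \<Rightarrow> bool" where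
  "equilibrium_pub n K Vs Vl P \<phi> \<longleftrightarrow> BNE_pub n K Vs Vl P \<phi> \<and>
     (\<forall>i\<in>voters n. \<not> weakly_dominated_pub n K Vs Vl P i (\<phi> i))"

end

theory Submission imports Defs begin

definition piv :: "nat \<Rightarrow> nat \<Rightarrow> (nat \<Rightarrow> real) \<Rightarrow> real" where
  "piv n i q = win_prob n (q(i:=1)) - win_prob n (q(i:=0))"

lemma finite_Omega: "finite Vs \<Longrightarrow> finite Vl \<Longrightarrow> finite (Omega n K Vs Vl)"
proof -
  assume a: "finite Vs" "finite Vl"
  have "Omega n K Vs Vl = PiE {1..n} (\<lambda>_. Vs \<times> Vl) \<times> profiles n K"
    by (auto simp: Omega_def)
  thus ?thesis using a by (simp add: profiles_def finite_PiE)
qed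

lemma prod_upd1:
  assumes "finite B"
  shows "(\<Prod>j\<in>B. (q(i:=a)) j) = (if i \<in> B then a * (\<Prod>j\<in>B-{i}. q j) else (\<Prod>j\<in>B. q j))"
proof (cases "i \<in> B")
  case True
  have "(\<Prod>j\<in>B. (q(i:=a)) j) = (q(i:=a)) i * (\<Prod>j\<in>B-{i}. (q(i:=a)) j)"
    by (rule prod.remove[OF assms True])
  also have "(\<Prod>j\<in>B-{i}. (q(i:=a)) j) = (\<Prod>j\<in>B-{i}. q j)" by (rule prod.cong) auto
  finally show ?thesis using True by simp
next
  case False
  then show ?thesis by (simp, intro prod.cong) auto
qed

lemma prod_upd2:
  assumes "finite B"
  shows "(\<Prod>j\<in>B. 1 - (q(i:=a)) j) = (if i \<in> B then (1 - a) * (\<Prod>j\<in>B-{i}. 1 - q j) else (\<Prod>j\<in>B. 1 - q j))"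
proof (cases "i \<in> B")
  case True
  have "(\<Prod>j\<in>B. 1 - (q(i:=a)) j) = (1 - (q(i:=a)) i) * (\<Prod>j\<in>B-{i}. 1 - (q(i:=a)) j)"
    by (rule prod.remove[OF assms True])
  also have "(\<Prod>j\<in>B-{i}. 1 - (q(i:=a)) j) = (\<Prod>j\<in>B-{i}. 1 - q j)" by (rule prod.cong) auto
  finally show ?thesis using True by simp
next
  case False
  then show ?thesis by (simp, intro prod.cong) auto
qed

lemma win_prob_affine:
  "win_prob n (q(i:=a)) = a * win_prob n (q(i:=1)) + (1-a) * win_prob n (q(i:=0))"
proof -
  let ?S = "{A. A \<subseteq> voters n \<and> card A > tau n}"
  let ?t = "\<lambda>r A. (\<Prod>j\<in>A. r j) * (\<Prod>j\<in>voters n - A. 1 - r j)"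
  have "?t (q(i:=a)) A = a * ?t (q(i:=1)) A + (1-a) * ?t (q(i:=0)) A" if "A \<in> ?S" for A
  proof -
    have fA: "finite A" using that finite_subset[of A "voters n"] by (auto simp: voters_def)
    have fB: "finite (voters n - A)" by (auto simp: voters_def)
    show ?thesis
      unfolding prod_upd1[OF fA] prod_upd2[OF fB]
      by (cases "i \<in> A"; cases "i \<in> voters n") (simp_all add: ring_distribs)
  qed
  hence "win_prob n (q(i:=a)) = (\<Sum>A\<in>?S. a * ?t (q(i:=1)) A + (1-a) * ?t (q(i:=0)) A)"
    unfolding win_prob_def by (rule sum.cong[OF refl])
  thus ?thesis unfolding win_prob_def by (simp add: sum.distrib sum_distrib_left)
qed

lemma EU_diff:
  "EU n K Vs Vl P i (beh(i:=c)) - EU n K Vs Vl P i (beh(i:=c')) =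
   (\<Sum>\<omega>\<in>Omega n K Vs Vl. P \<omega> * (c \<omega> - c' \<omega>) * piv n i (\<lambda>j. beh j \<omega>) * Vd i \<omega>)"
  unfolding EU_def sum_subtractf[symmetric]
proof (rule sum.cong[OF refl])
  fix \<omega>
  let ?q = "\<lambda>j. beh j \<omega>"
  have e1: "(\<lambda>j. (beh(i:=c)) j \<omega>) = ?q(i := c \<omega>)" by auto
  have e2: "(\<lambda>j. (beh(i:=c')) j \<omega>) = ?q(i := c' \<omega>)" by auto
  show "P \<omega> * (win_prob n (\<lambda>j. (beh(i := c)) j \<omega>) * fst (fst \<omega> i) +
          (1 - win_prob n (\<lambda>j. (beh(i := c)) j \<omega>)) * snd (fst \<omega> i)) -
        P \<omega> * (win_prob n (\<lambda>j. (beh(i := c')) j \<omega>) * fst (fst \<omega> i) +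
          (1 - win_prob n (\<lambda>j. (beh(i := c')) j \<omega>)) * snd (fst \<omega> i)) =
        P \<omega> * (c \<omega> - c' \<omega>) * piv n i ?q * Vd i \<omega>"
    unfolding e1 e2 win_prob_affine[of n ?q i "c \<omega>"] win_prob_affine[of n ?q i "c' \<omega>"]
      piv_def Vd_def by (simp add: algebra_simps)
qed


lemma finite_voters[simp]: "finite (voters n)" by (simp add: voters_def)

lemma piv_nonneg:
  assumes iV: "i \<in> voters n" and q01: "\<forall>j\<in>voters n. 0 \<le> q j \<and> q j \<le> 1"
  shows "0 \<le> piv n i q"
proof -
  define V where "V = voters n"
  define S where "S = {A. A \<subseteq> V \<and> card A > tau n}"
  define X where "X = (\<lambda>B. (\<Prod>j\<in>B. q j) * (\<Prod>j\<in>V - {i} - B. 1 - q j))"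
  have fS: "finite S" unfolding S_def V_def by (rule finite_subset[of _ "Pow (voters n)"]) auto
  have fin: "finite A" if "A \<in> S" for A using that unfolding S_def V_def
    by (metis (no_types, lifting) finite_voters finite_subset mem_Collect_eq)
  have t1: "(\<Prod>j\<in>A. (q(i:=1)) j) * (\<Prod>j\<in>V - A. 1 - (q(i:=1)) j) = (if i \<in> A then X (A - {i}) else 0)"
    if "A \<in> S" for A
  proof -
    have fA: "finite A" using fin that .
    have fB: "finite (V - A)" unfolding V_def by simp
    have iV': "i \<in> V" using iV by (simp add: V_def)
    show ?thesis
    proof (cases "i \<in> A")
      case True
      then have "V - A = V - {i} - (A - {i})" by auto
      with True show ?thesis unfolding prod_upd1[OF fA] prod_upd2[OF fB] X_def by simp
    next
      case False
      with iV' show ?thesis unfolding prod_upd1[OF fA] prod_upd2[OF fB] X_def by simp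
    qed
  qed
  have t0: "(\<Prod>j\<in>A. (q(i:=0)) j) * (\<Prod>j\<in>V - A. 1 - (q(i:=0)) j) = (if i \<notin> A then X A else 0)"
    if "A \<in> S" for A
  proof -
    have fA: "finite A" using fin that .
    have fB: "finite (V - A)" unfolding V_def by simp
    have iV': "i \<in> V" using iV by (simp add: V_def)
    have e: "V - A - {i} = V - {i} - A" by auto
    show ?thesis unfolding prod_upd1[OF fA] prod_upd2[OF fB] X_def
      using iV' by (cases "i \<in> A") (simp_all add: e)
  qed
  have W1: "win_prob n (q(i:=1)) = (\<Sum>A\<in>{A\<in>S. i \<in> A}. X (A - {i}))"
    unfolding win_prob_def sum.inter_filter[OF fS] V_def[symmetric] S_def[symmetric]
    by (rule sum.cong[OF refl]) (rule t1)
  have W0: "win_prob n (q(i:=0)) = (\<Sum>A\<in>{A\<in>S. i \<notin> A}. X A)"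
    unfolding win_prob_def sum.inter_filter[OF fS] V_def[symmetric] S_def[symmetric]
    by (rule sum.cong[OF refl]) (rule t0)
  have inj: "inj_on (insert i) {A\<in>S. i \<notin> A}"
    by (rule inj_onI) (metis (mono_tags, lifting) Diff_insert_absorb mem_Collect_eq)
  have "(\<Sum>A\<in>{A\<in>S. i \<notin> A}. X A) = (\<Sum>A\<in>insert i ` {A\<in>S. i \<notin> A}. X (A - {i}))"
    by (subst sum.reindex[OF inj]) (rule sum.cong[OF refl], simp add: Diff_insert_absorb)
  also have "\<dots> \<le> (\<Sum>A\<in>{A\<in>S. i \<in> A}. X (A - {i}))"
  proof (rule sum_mono2)
    show "finite {A \<in> S. i \<in> A}" using fS by simp
    show "insert i ` {A \<in> S. i \<notin> A} \<subseteq> {A \<in> S. i \<in> A}"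
    proof
      fix B assume "B \<in> insert i ` {A \<in> S. i \<notin> A}"
      then obtain A where A: "A \<in> S" "i \<notin> A" "B = insert i A" by auto
      have "card B = card A + 1" using A fin[OF A(1)] by simp
      thus "B \<in> {A \<in> S. i \<in> A}" using A iV unfolding S_def V_def by auto
    qed
    show "0 \<le> X (b - {i})" if "b \<in> {A \<in> S. i \<in> A} - insert i ` {A \<in> S. i \<notin> A}" for b
    proof -
      have "b \<subseteq> V" using that unfolding S_def by auto
      thus ?thesis unfolding X_def using q01
        by (intro mult_nonneg_nonneg prod_nonneg) (auto simp: V_def)
    qed
  qed
  finally show ?thesis unfolding piv_def W1 W0 by simp
qed

lemma win_prob_indicator:
  assumes Y: "Y \<subseteq> voters n"
  shows "win_prob n (\<lambda>j. if j \<in> Y then 1 else 0) = (if card Y > tau n then 1 else 0)"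
proof -
  define V where "V = voters n"
  define S where "S = {A. A \<subseteq> V \<and> card A > tau n}"
  have fS: "finite S" unfolding S_def V_def by (rule finite_subset[of _ "Pow (voters n)"]) auto
  have p1: "(\<Prod>j\<in>A. (if j \<in> Y then 1 else 0::real)) = (if A \<subseteq> Y then 1 else 0)" if "finite A" for A
  proof (cases "A \<subseteq> Y")
    case True thus ?thesis by (auto intro!: prod.neutral)
  next
    case False then obtain j where "j \<in> A" "j \<notin> Y" by auto
    thus ?thesis using that False by (auto intro!: prod_zero)
  qed
  have p2: "(\<Prod>j\<in>B. 1 - (if j \<in> Y then 1 else 0::real)) = (if B \<inter> Y = {} then 1 else 0)" if "finite B" for B
  proof (cases "B \<inter> Y = {}")
    case True thus ?thesis by (auto intro!: prod.neutral)
  next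
    case False then obtain j where "j \<in> B" "j \<in> Y" by auto
    thus ?thesis using that False by (auto intro!: prod_zero)
  qed
  have "win_prob n (\<lambda>j. if j \<in> Y then 1 else 0) = (\<Sum>A\<in>S. if A = Y then 1 else 0)"
    unfolding win_prob_def V_def[symmetric] S_def[symmetric]
  proof (rule sum.cong[OF refl])
    fix A assume A: "A \<in> S"
    have fA: "finite A" using A unfolding S_def V_def using finite_subset[OF _ finite_voters] by blast
    have fB: "finite (V - A)" unfolding V_def by simp
    show "(\<Prod>j\<in>A. if j \<in> Y then 1 else 0) * (\<Prod>j\<in>V - A. 1 - (if j \<in> Y then 1 else 0)) =
          (if A = Y then 1 else (0::real))"
      unfolding p1[OF fA] p2[OF fB] using A Y unfolding S_def V_def by auto
  qed
  also have "\<dots> = (if Y \<in> S then 1 else 0)" using fS by (simp add: sum.delta')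
  finally show ?thesis using Y unfolding S_def V_def by auto
qed

lemma inj_transpose': "inj (Transposition.transpose a b)"
  by (rule injI) (rule transpose_eq_imp_eq)

lemma win_prob_perm:
  assumes a: "a \<in> voters n" and b: "b \<in> voters n"
  shows "win_prob n (\<lambda>j. q (Transposition.transpose a b j)) = win_prob n q"
proof -
  define V where "V = voters n"
  define \<pi> where "\<pi> = Transposition.transpose a b"
  define S where "S = {A. A \<subseteq> V \<and> card A > tau n}"
  have inj: "inj \<pi>" unfolding \<pi>_def by (rule inj_transpose')
  have invol: "\<pi> ` (\<pi> ` A) = A" for A by (simp add: image_comp \<pi>_def)
  have piV: "\<pi> ` V = V" unfolding \<pi>_def using a b by (simp add: V_def)
  have mapS: "\<pi> ` A \<in> S" if "A \<in> S" for A
  proof -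
    have "\<pi> ` A \<subseteq> V" using that piV unfolding S_def by auto
    moreover have "card (\<pi> ` A) = card A" using inj by (simp add: card_image inj_on_subset)
    ultimately show ?thesis using that unfolding S_def by auto
  qed
  show ?thesis
    unfolding win_prob_def V_def[symmetric] S_def[symmetric] \<pi>_def[symmetric]
  proof (rule sum.reindex_bij_witness[where i="image \<pi>" and j="image \<pi>"])
    show "\<And>A. A \<in> S \<Longrightarrow> \<pi> ` \<pi> ` A = A" by (rule invol)
    show "\<And>A. A \<in> S \<Longrightarrow> \<pi> ` A \<in> S" by (rule mapS)
    show "\<And>A. A \<in> S \<Longrightarrow> \<pi> ` \<pi> ` A = A" by (rule invol)
    show "\<And>A. A \<in> S \<Longrightarrow> \<pi> ` A \<in> S" by (rule mapS)
    fix A assume A: "A \<in> S"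
    have e: "V - \<pi> ` A = \<pi> ` (V - A)" using piV inj by (simp add: image_set_diff)
    show "(\<Prod>j\<in>\<pi> ` A. q j) * (\<Prod>j\<in>V - \<pi> ` A. 1 - q j) =
          (\<Prod>j\<in>A. q (\<pi> j)) * (\<Prod>j\<in>V - A. 1 - q (\<pi> j))"
      unfolding e using inj by (simp add: prod.reindex inj_on_subset)
  qed
qed

lemma sum_PVd:
  assumes fin: "finite \<Omega>" and nn: "\<forall>\<omega>\<in>\<Omega>. P \<omega> \<ge> 0"
  shows "(\<Sum>\<omega>\<in>E \<inter> \<Omega>. P \<omega> * Vd i \<omega>) = Pr \<Omega> P E * VdE \<Omega> P i E"
proof (cases "Pr \<Omega> P E > 0")
  case True thus ?thesis unfolding VdE_def by simp
next
  case False
  have fE: "finite (E \<inter> \<Omega>)" using fin by simp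
  have "Pr \<Omega> P E \<ge> 0" unfolding Pr_def using nn by (intro sum_nonneg) auto
  hence z: "Pr \<Omega> P E = 0" using False by simp
  hence "\<forall>\<omega>\<in>E \<inter> \<Omega>. P \<omega> = 0" unfolding Pr_def using sum_nonneg_eq_0_iff[OF fE] nn by auto
  thus ?thesis using z by simp
qed

lemma group_snd:
  fixes F :: "'b \<Rightarrow> real" and G :: "'a \<times> 'b \<Rightarrow> real"
  assumes fin: "finite \<Omega>"
  shows "(\<Sum>\<omega>\<in>\<Omega>. F (snd \<omega>) * G \<omega>) = (\<Sum>s\<in>snd ` \<Omega>. F s * (\<Sum>\<omega>\<in>{\<omega>\<in>\<Omega>. snd \<omega> = s}. G \<omega>))"
proof -
  have "(\<Sum>\<omega>\<in>\<Omega>. F (snd \<omega>) * G \<omega>) = (\<Sum>s\<in>snd ` \<Omega>. \<Sum>\<omega>\<in>{\<omega>\<in>\<Omega>. snd \<omega> = s}. F (snd \<omega>) * G \<omega>)"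
    by (rule sum.image_gen[OF fin])
  also have "\<dots> = (\<Sum>s\<in>snd ` \<Omega>. F s * (\<Sum>\<omega>\<in>{\<omega>\<in>\<Omega>. snd \<omega> = s}. G \<omega>))"
    apply (rule sum.cong[OF refl])
    apply (subst sum_distrib_left)
    apply (rule sum.cong[OF refl])
    by simp
  finally show ?thesis .
qed

lemma prof_inter: "prof_event \<Omega> s \<inter> \<Omega> = {\<omega>\<in>\<Omega>. snd \<omega> = s}"
  by (auto simp: prof_event_def)


definition Gain :: "nat \<Rightarrow> state set \<Rightarrow> (state \<Rightarrow> real) \<Rightarrow> nat \<Rightarrow> (nat \<Rightarrow> nat \<Rightarrow> real) \<Rightarrow> nat \<Rightarrow> real" where
  "Gain n \<Omega> P i \<sigma> k = (\<Sum>\<omega>\<in>\<Omega>. (if snd \<omega> i = k then piv n i (\<lambda>j. \<sigma> j (snd \<omega> j)) else 0) * (P \<omega> * Vd i \<omega>))"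

lemma PiE_transpose:
  assumes "f \<in> PiE {1..n} (\<lambda>_. B)" "a \<in> {1..n}" "b \<in> {1..n}"
  shows "f \<circ> Transposition.transpose a b \<in> PiE {1..n} (\<lambda>_. B)"
proof -
  have "Transposition.transpose a b j \<in> {1..n}" if "j \<in> {1..n}" for j
    using that assms(2,3) by (auto simp: transpose_def)
  moreover have "Transposition.transpose a b j = j" if "j \<notin> {1..n}" for j
    using that assms(2,3) by (auto simp: transpose_def)
  ultimately show ?thesis using assms(1) unfolding PiE_def Pi_def extensional_def by auto
qed

lemma cont_wp:
  fixes Q :: "real \<Rightarrow> nat \<Rightarrow> real"
  assumes "\<And>j. continuous_on S (\<lambda>x. Q x j)"
  shows "continuous_on S (\<lambda>x. win_prob n (Q x))"
  unfolding win_prob_def using assms by (intro continuous_intros) auto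

locale SA =
  fixes n K :: nat and Vs Vl :: "real set" and P :: "state \<Rightarrow> real"
  assumes sa: "standing_assumptions n K Vs Vl P"
begin

abbreviation "Om \<equiv> Omega n K Vs Vl"

lemma n3: "n \<ge> 3" using sa unfolding standing_assumptions_def Let_def by auto
lemma oddn: "odd n" using sa unfolding standing_assumptions_def Let_def by auto
lemma finOm: "finite Om" using sa finite_Omega unfolding standing_assumptions_def Let_def by auto
lemma Pnn: "\<forall>\<omega>\<in>Om. P \<omega> \<ge> 0" using sa unfolding standing_assumptions_def Let_def by auto
lemma perm_inv: "\<pi> permutes voters n \<Longrightarrow> (v, s) \<in> Om \<Longrightarrow> P (v \<circ> \<pi>, s \<circ> \<pi>) = P (v, s)"
  using sa unfolding standing_assumptions_def Let_def by auto
lemma SIG: "i \<in> voters n \<Longrightarrow> s \<in> profiles n K \<Longrightarrow> s i \<noteq> 0 \<Longrightarrow>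
     (VdE Om P i (prof_event Om s) > 0 \<longleftrightarrow> VdE Om P i (sig_event Om i (s i)) > 0)"
  using sa unfolding standing_assumptions_def Let_def by auto
lemma NZ: "i \<in> voters n \<Longrightarrow> E \<subseteq> Om \<Longrightarrow> Pr Om P E > 0 \<Longrightarrow> VdE Om P i E \<noteq> 0"
  using sa unfolding standing_assumptions_def Let_def by auto

lemma one_V: "1 \<in> voters n" using n3 by (simp add: voters_def)

lemma Om_mem: "\<omega> \<in> Om \<Longrightarrow> snd \<omega> \<in> profiles n K"
  by (auto simp: Omega_def)

lemma Om_sig: "\<omega> \<in> Om \<Longrightarrow> i \<in> voters n \<Longrightarrow> snd \<omega> i \<in> {0..K}"
  by (auto simp: Omega_def profiles_def voters_def)

definition hperm :: "nat \<Rightarrow> state \<Rightarrow> state" where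
  "hperm i \<omega> = (fst \<omega> \<circ> Transposition.transpose 1 i, snd \<omega> \<circ> Transposition.transpose 1 i)"

lemma hperm_invol: "hperm i (hperm i \<omega>) = \<omega>"
  by (simp add: hperm_def comp_assoc)

lemma hperm_Om: assumes "i \<in> voters n" "\<omega> \<in> Om" shows "hperm i \<omega> \<in> Om"
proof -
  obtain v s where w: "\<omega> = (v,s)" by (cases \<omega>)
  from assms(2) w have v: "v \<in> PiE {1..n} (\<lambda>_. Vs \<times> Vl)" and s: "s \<in> PiE {1..n} (\<lambda>_. {0..K})"
    by (auto simp: Omega_def profiles_def)
  have 1: "1 \<in> {1..n}" "i \<in> {1..n}" using one_V assms(1) by (auto simp: voters_def)
  show ?thesis using PiE_transpose[OF v 1] PiE_transpose[OF s 1] w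
    by (simp add: hperm_def Omega_def profiles_def)
qed

lemma hperm_snd: "snd (hperm i \<omega>) i = snd \<omega> 1" by (simp add: hperm_def)
lemma hperm_Vd: "Vd i (hperm i \<omega>) = Vd 1 \<omega>" by (simp add: hperm_def Vd_def)

lemma hperm_P: assumes "i \<in> voters n" "\<omega> \<in> Om" shows "P (hperm i \<omega>) = P \<omega>"
proof -
  obtain v s where w: "\<omega> = (v, s)" by (cases \<omega>)
  have "Transposition.transpose 1 i permutes voters n" using assms(1) one_V by (rule permutes_swap_id[rotated])
  thus ?thesis using perm_inv assms w by (simp add: hperm_def)
qed

lemma sum_hperm: assumes "i \<in> voters n" shows "(\<Sum>\<omega>\<in>Om. F \<omega>) = (\<Sum>\<omega>\<in>Om. F (hperm i \<omega>))"
  by (rule sum.reindex_bij_witness[where i="hperm i" and j="hperm i"])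
     (auto simp: hperm_invol hperm_Om assms)

lemma Gain_transfer:
  assumes iV: "i \<in> voters n"
  shows "Gain n Om P i \<sigma> k = Gain n Om P 1 (\<lambda>j. \<sigma> (Transposition.transpose 1 i j)) k"
proof -
  define \<pi> where "\<pi> = Transposition.transpose 1 i"
  have pii: "\<pi> (\<pi> j) = j" for j by (simp add: \<pi>_def)
  have pi_i: "\<pi> i = 1" by (simp add: \<pi>_def)
  have pi_1: "\<pi> 1 = i" by (simp add: \<pi>_def)
  have pivtr: "piv n i (\<lambda>j. \<sigma> j (s (\<pi> j))) = piv n 1 (\<lambda>j. \<sigma> (\<pi> j) (s j))" for s
  proof -
    define r where "r = (\<lambda>j. \<sigma> (\<pi> j) (s j))"
    have e: "(\<lambda>j. \<sigma> j (s (\<pi> j)))(i := c) = (\<lambda>j. (r(1:=c)) (\<pi> j))" for c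
    proof
      fix j show "((\<lambda>j. \<sigma> j (s (\<pi> j)))(i := c)) j = (r(1:=c)) (\<pi> j)"
      proof (cases "j = i")
        case True thus ?thesis by (simp add: pi_i)
      next
        case False
        have "\<pi> j \<noteq> 1" using False pi_1 pii by metis
        thus ?thesis using False by (simp add: r_def pii)
      qed
    qed
    have "piv n i (\<lambda>j. \<sigma> j (s (\<pi> j))) = win_prob n ((\<lambda>j. \<sigma> j (s (\<pi> j)))(i:=1)) - win_prob n ((\<lambda>j. \<sigma> j (s (\<pi> j)))(i:=0))"
      by (simp add: piv_def)
    also have "\<dots> = win_prob n (\<lambda>j. (r(1:=1)) (\<pi> j)) - win_prob n (\<lambda>j. (r(1:=0)) (\<pi> j))"
      by (simp only: e)
    also have "\<dots> = win_prob n (r(1:=1)) - win_prob n (r(1:=0))"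
    proof -
      have wp: "win_prob n (\<lambda>j. (r(1:=c)) (\<pi> j)) = win_prob n (r(1:=c))" for c
        unfolding \<pi>_def by (rule win_prob_perm[OF one_V iV])
      show ?thesis by (simp only: wp)
    qed
    also have "\<dots> = piv n 1 r" by (simp add: piv_def)
    finally show ?thesis by (simp add: r_def)
  qed
  have "Gain n Om P i \<sigma> k = (\<Sum>\<omega>\<in>Om. (if snd (hperm i \<omega>) i = k then piv n i (\<lambda>j. \<sigma> j (snd (hperm i \<omega>) j)) else 0) * (P (hperm i \<omega>) * Vd i (hperm i \<omega>)))"
    unfolding Gain_def by (rule sum_hperm[OF iV])
  also have "\<dots> = Gain n Om P 1 (\<lambda>j. \<sigma> (\<pi> j)) k"
    unfolding Gain_def
  proof (rule sum.cong[OF refl])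
    fix \<omega> assume w: "\<omega> \<in> Om"
    have "snd (hperm i \<omega>) = (\<lambda>j. snd \<omega> (\<pi> j))" by (auto simp: hperm_def \<pi>_def)
    moreover have "Vd i (hperm i \<omega>) = Vd 1 \<omega>" by (simp add: hperm_def Vd_def)
    moreover have "P (hperm i \<omega>) = P \<omega>" by (rule hperm_P[OF iV w])
    ultimately show "(if snd (hperm i \<omega>) i = k then piv n i (\<lambda>j. \<sigma> j (snd (hperm i \<omega>) j)) else 0) * (P (hperm i \<omega>) * Vd i (hperm i \<omega>)) =
       (if snd \<omega> 1 = k then piv n 1 (\<lambda>j. \<sigma> (\<pi> j) (snd \<omega> j)) else 0) * (P \<omega> * Vd 1 \<omega>)"
      using pivtr[of "snd \<omega>"] pi_i by simp
  qed
  finally show ?thesis unfolding \<pi>_def .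
qed

lemma sig_sum: "(\<Sum>\<omega>\<in>sig_event Om i k \<inter> Om. G \<omega>) = (\<Sum>\<omega>\<in>Om. if snd \<omega> i = k then G \<omega> else 0)"
proof -
  have "sig_event Om i k \<inter> Om = {\<omega>\<in>Om. snd \<omega> i = k}" by (auto simp: sig_event_def)
  thus ?thesis using sum.inter_filter[OF finOm] by simp
qed

lemma VdE_sig_transfer:
  assumes iV: "i \<in> voters n"
  shows "VdE Om P i (sig_event Om i k) = VdE Om P 1 (sig_event Om 1 k)"
proof -
  have a: "Pr Om P (sig_event Om i k) = Pr Om P (sig_event Om 1 k)"
    unfolding Pr_def sig_sum
    by (subst sum_hperm[OF iV]) (intro sum.cong refl, simp add: hperm_P[OF iV] hperm_snd)
  have b: "(\<Sum>\<omega>\<in>sig_event Om i k \<inter> Om. P \<omega> * Vd i \<omega>) = (\<Sum>\<omega>\<in>sig_event Om 1 k \<inter> Om. P \<omega> * Vd 1 \<omega>)"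
    unfolding sig_sum
    by (subst sum_hperm[OF iV]) (intro sum.cong refl, simp add: hperm_P[OF iV] hperm_snd hperm_Vd)
  show ?thesis unfolding VdE_def a b ..
qed

lemma good_transfer: "i \<in> voters n \<Longrightarrow> good_news Om P i k = good_news Om P 1 k"
  unfolding good_news_def using VdE_sig_transfer by simp
lemma bad_transfer: "i \<in> voters n \<Longrightarrow> bad_news Om P i k = bad_news Om P 1 k"
  unfolding bad_news_def using VdE_sig_transfer by simp


lemma priv_beh_upd: "priv_beh (\<sigma>(i:=g)) = (priv_beh \<sigma>)(i := (\<lambda>\<omega>. g (snd \<omega> i)))"
  by (rule ext)+ (simp add: priv_beh_def)

lemma pub_beh_upd: "pub_beh (\<phi>(i:=g)) = (pub_beh \<phi>)(i := (\<lambda>\<omega>. g (snd \<omega>)))"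
  by (rule ext)+ (simp add: pub_beh_def)

lemma EU_priv_diff:
  assumes iV: "i \<in> voters n"
  shows "EU n K Vs Vl P i (priv_beh (\<sigma>(i:=g))) - EU n K Vs Vl P i (priv_beh (\<sigma>(i:=f))) =
         (\<Sum>k\<in>{0..K}. (g k - f k) * Gain n Om P i \<sigma> k)"
proof -
  define h where "h = (\<lambda>\<omega>. P \<omega> * (g (snd \<omega> i) - f (snd \<omega> i)) * piv n i (\<lambda>j. \<sigma> j (snd \<omega> j)) * Vd i \<omega>)"
  have "EU n K Vs Vl P i (priv_beh (\<sigma>(i:=g))) - EU n K Vs Vl P i (priv_beh (\<sigma>(i:=f))) = (\<Sum>\<omega>\<in>Om. h \<omega>)"
    unfolding priv_beh_upd EU_diff h_def by (simp add: priv_beh_def)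
  also have "\<dots> = (\<Sum>\<omega>\<in>Om. \<Sum>k\<in>{0..K}. if snd \<omega> i = k then h \<omega> else 0)"
  proof (rule sum.cong[OF refl])
    fix \<omega> assume "\<omega> \<in> Om"
    hence "snd \<omega> i \<in> {0..K}" using Om_sig iV by blast
    thus "h \<omega> = (\<Sum>k\<in>{0..K}. if snd \<omega> i = k then h \<omega> else 0)" by (simp add: sum.delta)
  qed
  also have "\<dots> = (\<Sum>k\<in>{0..K}. \<Sum>\<omega>\<in>Om. if snd \<omega> i = k then h \<omega> else 0)" by (rule sum.swap)
  also have "\<dots> = (\<Sum>k\<in>{0..K}. (g k - f k) * Gain n Om P i \<sigma> k)"
  proof (rule sum.cong[OF refl])
    fix k
    show "(\<Sum>\<omega>\<in>Om. if snd \<omega> i = k then h \<omega> else 0) = (g k - f k) * Gain n Om P i \<sigma> k"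
      unfolding Gain_def sum_distrib_left
      by (rule sum.cong[OF refl]) (simp add: h_def)
  qed
  finally show ?thesis .
qed

lemma Gain_grouped:
  "Gain n Om P i \<sigma> k = (\<Sum>s\<in>snd ` Om. (if s i = k then piv n i (\<lambda>j. \<sigma> j (s j)) else 0) *
      (Pr Om P (prof_event Om s) * VdE Om P i (prof_event Om s)))"
proof -
  have "Gain n Om P i \<sigma> k = (\<Sum>s\<in>snd ` Om. (if s i = k then piv n i (\<lambda>j. \<sigma> j (s j)) else 0) *
      (\<Sum>\<omega>\<in>{\<omega>\<in>Om. snd \<omega> = s}. P \<omega> * Vd i \<omega>))"
    unfolding Gain_def
    by (rule group_snd[OF finOm, where F = "\<lambda>s. if s i = k then piv n i (\<lambda>j. \<sigma> j (s j)) else 0"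
          and G = "\<lambda>\<omega>. P \<omega> * Vd i \<omega>"])
  also have "\<dots> = (\<Sum>s\<in>snd ` Om. (if s i = k then piv n i (\<lambda>j. \<sigma> j (s j)) else 0) *
      (Pr Om P (prof_event Om s) * VdE Om P i (prof_event Om s)))"
    by (rule sum.cong[OF refl]) (simp only: prof_inter[symmetric] sum_PVd[OF finOm Pnn])
  finally show ?thesis .
qed

lemma piv_valid:
  assumes iV: "i \<in> voters n" and v: "valid_priv_profile n K \<sigma>" and s: "s \<in> profiles n K"
  shows "0 \<le> piv n i (\<lambda>j. \<sigma> j (s j))"
proof (rule piv_nonneg[OF iV])
  show "\<forall>j\<in>voters n. 0 \<le> \<sigma> j (s j) \<and> \<sigma> j (s j) \<le> 1"
  proof
    fix j assume j: "j \<in> voters n"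
    hence "s j \<in> {0..K}" using s by (auto simp: profiles_def voters_def)
    thus "0 \<le> \<sigma> j (s j) \<and> \<sigma> j (s j) \<le> 1" using v j
      unfolding valid_priv_profile_def valid_sig_strategy_def by blast
  qed
qed

lemma Pr_nonneg: "Pr Om P E \<ge> 0" unfolding Pr_def using Pnn by (intro sum_nonneg) auto

lemma Gain_good:
  assumes iV: "i \<in> voters n" and v: "valid_priv_profile n K \<sigma>" and g: "good_news Om P i k"
  shows "Gain n Om P i \<sigma> k \<ge> 0"
  unfolding Gain_grouped
proof (rule sum_nonneg)
  fix s assume "s \<in> snd ` Om"
  hence s: "s \<in> profiles n K" using Om_mem by auto
  show "0 \<le> (if s i = k then piv n i (\<lambda>j. \<sigma> j (s j)) else 0) *
      (Pr Om P (prof_event Om s) * VdE Om P i (prof_event Om s))"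
  proof (cases "s i = k")
    case True
    have "k \<noteq> 0" "VdE Om P i (sig_event Om i k) > 0" using g by (auto simp: good_news_def)
    hence "VdE Om P i (prof_event Om s) > 0" using SIG[OF iV s] True by simp
    thus ?thesis using True piv_valid[OF iV v s] Pr_nonneg by simp
  qed simp
qed

lemma Gain_bad:
  assumes iV: "i \<in> voters n" and v: "valid_priv_profile n K \<sigma>" and g: "bad_news Om P i k"
  shows "Gain n Om P i \<sigma> k \<le> 0"
  unfolding Gain_grouped
proof (rule sum_nonpos)
  fix s assume "s \<in> snd ` Om"
  hence s: "s \<in> profiles n K" using Om_mem by auto
  show "(if s i = k then piv n i (\<lambda>j. \<sigma> j (s j)) else 0) *
      (Pr Om P (prof_event Om s) * VdE Om P i (prof_event Om s)) \<le> 0"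
  proof (cases "s i = k")
    case True
    have "k \<noteq> 0" "VdE Om P i (sig_event Om i k) < 0" using g by (auto simp: bad_news_def)
    hence "\<not> VdE Om P i (prof_event Om s) > 0" using SIG[OF iV s] True by simp
    hence "Pr Om P (prof_event Om s) * VdE Om P i (prof_event Om s) \<le> 0"
      using Pr_nonneg by (simp add: mult_nonneg_nonpos)
    thus ?thesis using True piv_valid[OF iV v s] by (simp add: mult_nonneg_nonpos)
  qed simp
qed

lemma Gain_null:
  assumes iV: "i \<in> voters n" and z: "VdE Om P i (sig_event Om i k) = 0"
  shows "Gain n Om P i \<sigma> k = 0"
proof -
  have "\<not> Pr Om P (sig_event Om i k) > 0"
    using NZ[OF iV] z by (auto simp: sig_event_def)
  hence z2: "Pr Om P (sig_event Om i k) = 0" using Pr_nonneg[of "sig_event Om i k"] by simp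
  have fE: "finite (sig_event Om i k \<inter> Om)" using finOm by simp
  have "\<forall>\<omega>\<in>sig_event Om i k \<inter> Om. P \<omega> = 0"
    using z2 sum_nonneg_eq_0_iff[OF fE] Pnn unfolding Pr_def by auto
  hence "\<forall>\<omega>\<in>Om. snd \<omega> i = k \<longrightarrow> P \<omega> = 0" by (auto simp: sig_event_def)
  thus ?thesis unfolding Gain_def by (intro sum.neutral) auto
qed


definition sx :: "real \<Rightarrow> nat \<Rightarrow> nat \<Rightarrow> real" where
  "sx x = (\<lambda>j k. if good_news Om P 1 k then 1 else if k = 0 then x else 0)"

definition D :: "real \<Rightarrow> real" where
  "D x = Gain n Om P 1 (sx x) 0"

lemma sx_valid: "0 \<le> x \<Longrightarrow> x \<le> 1 \<Longrightarrow> valid_priv_profile n K (sx x)"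
  by (auto simp: valid_priv_profile_def valid_sig_strategy_def sx_def)

lemma Gain_sx: "i \<in> voters n \<Longrightarrow> Gain n Om P i (sx x) 0 = D x"
  by (simp add: Gain_transfer D_def sx_def)

lemma perm_valid:
  assumes iV: "i \<in> voters n" and v: "valid_priv_profile n K \<sigma>"
  shows "valid_priv_profile n K (\<lambda>j. \<sigma> (Transposition.transpose 1 i j))"
  unfolding valid_priv_profile_def
proof
  fix j assume j: "j \<in> voters n"
  have "Transposition.transpose 1 i j \<in> voters n" using j iV one_V by (auto simp: transpose_def)
  thus "valid_sig_strategy K (\<sigma> (Transposition.transpose 1 i j))" using v
    unfolding valid_priv_profile_def by blast
qed

lemma Gain_transfer_back:
  "i \<in> voters n \<Longrightarrow> Gain n Om P i (\<lambda>j. \<sigma> (Transposition.transpose 1 i j)) k = Gain n Om P 1 \<sigma> k"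
  by (simp add: Gain_transfer)

lemma bound:
  assumes iV: "i \<in> voters n" and v: "valid_priv_profile n K \<sigma>" and g: "valid_sig_strategy K g"
  shows "EU n K Vs Vl P i (priv_beh (\<sigma>(i:=g))) - EU n K Vs Vl P i (priv_beh (\<sigma>(i:=sx x i)))
         \<le> (g 0 - x) * Gain n Om P i \<sigma> 0"
proof -
  have e: "{0..K} = insert 0 {Suc 0..K}" by auto
  have s0: "sx x i 0 = x" by (simp add: sx_def good_news_def)
  have rest: "(\<Sum>k\<in>{Suc 0..K}. (g k - sx x i k) * Gain n Om P i \<sigma> k) \<le> 0"
  proof (rule sum_nonpos)
    fix k assume k: "k \<in> {Suc 0..K}"
    hence k0: "k \<noteq> 0" and gk: "0 \<le> g k" "g k \<le> 1" using g by (auto simp: valid_sig_strategy_def)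
    show "(g k - sx x i k) * Gain n Om P i \<sigma> k \<le> 0"
    proof (cases "good_news Om P 1 k")
      case True
      hence "good_news Om P i k" using good_transfer[OF iV] by simp
      hence "Gain n Om P i \<sigma> k \<ge> 0" by (rule Gain_good[OF iV v])
      moreover have "sx x i k = 1" using True by (simp add: sx_def)
      ultimately show ?thesis using gk by (simp add: mult_nonpos_nonneg)
    next
      case False
      hence sk: "sx x i k = 0" using k0 by (simp add: sx_def)
      have ng: "\<not> good_news Om P i k" using False good_transfer[OF iV] by simp
      show ?thesis
      proof (cases "bad_news Om P i k")
        case True
        hence "Gain n Om P i \<sigma> k \<le> 0" by (rule Gain_bad[OF iV v])
        thus ?thesis using sk gk by (simp add: mult_nonneg_nonpos)
      next
        case False
        hence "VdE Om P i (sig_event Om i k) = 0" using ng k0 by (auto simp: good_news_def bad_news_def)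
        thus ?thesis using Gain_null[OF iV] by simp
      qed
    qed
  qed
  show ?thesis unfolding EU_priv_diff[OF iV] e using rest s0 by (simp add: sum.insert)
qed

lemma EQ:
  assumes x01: "0 \<le> x" "x \<le> 1"
    and Q1: "D x > 0 \<Longrightarrow> x = 1" and Q0: "D x < 0 \<Longrightarrow> x = 0"
    and H: "\<And>i g. i \<in> voters n \<Longrightarrow> valid_sig_strategy K g \<Longrightarrow>
        (\<forall>\<sigma>'. valid_priv_profile n K \<sigma>' \<longrightarrow>
           EU n K Vs Vl P i (priv_beh (\<sigma>'(i:=sx x i))) \<le> EU n K Vs Vl P i (priv_beh (\<sigma>'(i:=g)))) \<Longrightarrow>
        (\<forall>\<sigma>'. valid_priv_profile n K \<sigma>' \<longrightarrow> (g 0 - x) * Gain n Om P i \<sigma>' 0 \<le> 0)"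
  shows "equilibrium_priv n K Vs Vl P (sx x)"
  unfolding equilibrium_priv_def BNE_priv_def
proof (intro conjI ballI allI impI)
  show v: "valid_priv_profile n K (sx x)" using sx_valid x01 .
  fix i assume iV: "i \<in> voters n"
  {
    fix f assume f: "valid_sig_strategy K f"
    have f0: "0 \<le> f 0" "f 0 \<le> 1" using f by (auto simp: valid_sig_strategy_def)
    have "EU n K Vs Vl P i (priv_beh ((sx x)(i:=f))) - EU n K Vs Vl P i (priv_beh ((sx x)(i:=sx x i)))
          \<le> (f 0 - x) * D x" using bound[OF iV v f, of x] Gain_sx[OF iV, of x] by simp
    moreover have "(f 0 - x) * D x \<le> 0"
    proof (cases "D x > 0")
      case True thus ?thesis using Q1 f0 by (simp add: mult_nonpos_nonneg)
    next
      case False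
      show ?thesis
      proof (cases "D x < 0")
        case True thus ?thesis using Q0 f0 by (simp add: mult_nonneg_nonpos)
      next
        case False
        hence "D x = 0" using \<open>\<not> D x > 0\<close> by simp
        thus ?thesis by simp
      qed
    qed
    ultimately show "EU n K Vs Vl P i (priv_beh ((sx x)(i := f))) \<le> EU n K Vs Vl P i (priv_beh (sx x))"
      by simp
  }
  show "\<not> weakly_dominated_priv n K Vs Vl P i (sx x i)"
  proof
    assume "weakly_dominated_priv n K Vs Vl P i (sx x i)"
    then obtain g \<sigma>' where g: "valid_sig_strategy K g"
      and all: "\<forall>\<sigma>'. valid_priv_profile n K \<sigma>' \<longrightarrow>
           EU n K Vs Vl P i (priv_beh (\<sigma>'(i:=sx x i))) \<le> EU n K Vs Vl P i (priv_beh (\<sigma>'(i:=g)))"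
      and v': "valid_priv_profile n K \<sigma>'"
      and lt: "EU n K Vs Vl P i (priv_beh (\<sigma>'(i:=sx x i))) < EU n K Vs Vl P i (priv_beh (\<sigma>'(i:=g)))"
      unfolding weakly_dominated_priv_def by blast
    have "(g 0 - x) * Gain n Om P i \<sigma>' 0 \<le> 0" using H[OF iV g all] v' by blast
    thus False using bound[OF iV v' g, of x] lt by simp
  qed
qed

lemma D_cont: "continuous_on {0..1} D"
proof -
  have c1: "continuous_on {0..1} (\<lambda>x. ((\<lambda>j. sx x j (s j))(1 := c)) j)" for s c j
  proof (cases "j = 1")
    case True thus ?thesis by simp
  next
    case False
    show ?thesis using False
      by (cases "good_news Om P 1 (s j)"; cases "s j = 0") (simp_all add: sx_def)
  qed
  have c2: "continuous_on {0..1} (\<lambda>x. (if snd \<omega> 1 = 0 then piv n 1 (\<lambda>j. sx x j (snd \<omega> j)) else 0))" for \<omega>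
  proof (cases "snd \<omega> 1 = 0")
    case True
    have "continuous_on {0..1} (\<lambda>x. piv n 1 (\<lambda>j. sx x j (snd \<omega> j)))"
      unfolding piv_def by (intro continuous_intros cont_wp c1)
    thus ?thesis using True by simp
  qed simp
  show ?thesis unfolding D_def[abs_def] Gain_def
    by (intro continuous_intros c2)
qed

lemma Q_exists: "\<exists>x. 0 \<le> x \<and> x \<le> 1 \<and> (D x > 0 \<longrightarrow> x = 1) \<and> (D x < 0 \<longrightarrow> x = 0)"
proof (cases "D 1 \<ge> 0")
  case True thus ?thesis by (intro exI[of _ 1]) auto
next
  case False
  show ?thesis
  proof (cases "D 0 \<le> 0")
    case True thus ?thesis by (intro exI[of _ 0]) auto
  next
    case F2: False
    obtain x where "0 \<le> x" "x \<le> 1" "D x = 0"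
      using IVT2'[of D 1 0 0] D_cont False F2 by auto
    thus ?thesis by auto
  qed
qed

lemma priv_exists: "\<exists>\<sigma>. equilibrium_priv n K Vs Vl P \<sigma>"
proof (cases "\<exists>\<sigma>. valid_priv_profile n K \<sigma> \<and> Gain n Om P 1 \<sigma> 0 < 0")
  case False
  note NEG = False
  have "equilibrium_priv n K Vs Vl P (sx 1)"
  proof (rule EQ)
    show "D 1 < 0 \<Longrightarrow> (1::real) = 0" using NEG sx_valid[of 1] unfolding D_def by auto
    fix i g assume iV: "i \<in> voters n" and g: "valid_sig_strategy K g"
    show "\<forall>\<sigma>'. valid_priv_profile n K \<sigma>' \<longrightarrow> (g 0 - 1) * Gain n Om P i \<sigma>' 0 \<le> 0"
    proof (intro allI impI)
      fix \<sigma>' assume v': "valid_priv_profile n K \<sigma>'"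
      have "Gain n Om P i \<sigma>' 0 \<ge> 0"
        using NEG perm_valid[OF iV v'] Gain_transfer[OF iV, of \<sigma>' 0] by force
      moreover have "g 0 \<le> 1" using g by (auto simp: valid_sig_strategy_def)
      ultimately show "(g 0 - 1) * Gain n Om P i \<sigma>' 0 \<le> 0" by (simp add: mult_nonpos_nonneg)
    qed
  qed auto
  thus ?thesis by blast
next
  case True
  note NEG = True
  then obtain \<sigma>n where vn: "valid_priv_profile n K \<sigma>n" and gn: "Gain n Om P 1 \<sigma>n 0 < 0" by blast
  show ?thesis
  proof (cases "\<exists>\<sigma>. valid_priv_profile n K \<sigma> \<and> Gain n Om P 1 \<sigma> 0 > 0")
    case False
    note POS = False
    have "equilibrium_priv n K Vs Vl P (sx 0)"
    proof (rule EQ)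
      show "D 0 > 0 \<Longrightarrow> (0::real) = 1" using POS sx_valid[of 0] unfolding D_def by auto
      fix i g assume iV: "i \<in> voters n" and g: "valid_sig_strategy K g"
      show "\<forall>\<sigma>'. valid_priv_profile n K \<sigma>' \<longrightarrow> (g 0 - 0) * Gain n Om P i \<sigma>' 0 \<le> 0"
      proof (intro allI impI)
        fix \<sigma>' assume v': "valid_priv_profile n K \<sigma>'"
        have "Gain n Om P i \<sigma>' 0 \<le> 0"
          using POS perm_valid[OF iV v'] Gain_transfer[OF iV, of \<sigma>' 0] by force
        moreover have "g 0 \<ge> 0" using g by (auto simp: valid_sig_strategy_def)
        ultimately show "(g 0 - 0) * Gain n Om P i \<sigma>' 0 \<le> 0" by (simp add: mult_nonneg_nonpos)
      qed
    qed auto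
    thus ?thesis by blast
  next
    case True
    then obtain \<sigma>p where vp: "valid_priv_profile n K \<sigma>p" and gp: "Gain n Om P 1 \<sigma>p 0 > 0" by blast
    obtain x where x: "0 \<le> x" "x \<le> 1" "D x > 0 \<longrightarrow> x = 1" "D x < 0 \<longrightarrow> x = 0"
      using Q_exists by blast
    have "equilibrium_priv n K Vs Vl P (sx x)"
    proof (rule EQ)
      fix i g assume iV: "i \<in> voters n" and g: "valid_sig_strategy K g"
        and all: "\<forall>\<sigma>'. valid_priv_profile n K \<sigma>' \<longrightarrow>
           EU n K Vs Vl P i (priv_beh (\<sigma>'(i:=sx x i))) \<le> EU n K Vs Vl P i (priv_beh (\<sigma>'(i:=g)))"
      define \<sigma>n' where "\<sigma>n' = (\<lambda>j. \<sigma>n (Transposition.transpose 1 i j))"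
      define \<sigma>p' where "\<sigma>p' = (\<lambda>j. \<sigma>p (Transposition.transpose 1 i j))"
      have vn': "valid_priv_profile n K \<sigma>n'" unfolding \<sigma>n'_def by (rule perm_valid[OF iV vn])
      have vp': "valid_priv_profile n K \<sigma>p'" unfolding \<sigma>p'_def by (rule perm_valid[OF iV vp])
      have gn': "Gain n Om P i \<sigma>n' 0 < 0" unfolding \<sigma>n'_def Gain_transfer_back[OF iV] by (rule gn)
      have gp': "Gain n Om P i \<sigma>p' 0 > 0" unfolding \<sigma>p'_def Gain_transfer_back[OF iV] by (rule gp)
      have "0 \<le> (g 0 - x) * Gain n Om P i \<sigma>n' 0" using all vn' bound[OF iV vn' g, of x] by force
      hence a: "g 0 - x \<le> 0" using gn' by (simp add: zero_le_mult_iff)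
      have "0 \<le> (g 0 - x) * Gain n Om P i \<sigma>p' 0" using all vp' bound[OF iV vp' g, of x] by force
      hence b: "g 0 - x \<ge> 0" using gp' by (simp add: zero_le_mult_iff)
      show "\<forall>\<sigma>'. valid_priv_profile n K \<sigma>' \<longrightarrow> (g 0 - x) * Gain n Om P i \<sigma>' 0 \<le> 0"
        using a b by simp
    qed (use x in auto)
    thus ?thesis by blast
  qed
qed


definition phs :: "nat \<Rightarrow> (nat \<Rightarrow> nat) \<Rightarrow> real" where
  "phs i s = (if VdE Om P i (prof_event Om s) > 0 then 1 else 0)"

lemma phs_valid: "valid_pub_profile n K phs"
  by (auto simp: valid_pub_profile_def valid_pub_strategy_def phs_def)

lemma EU_pub_diff:
  "EU n K Vs Vl P i (pub_beh (\<phi>(i:=g))) - EU n K Vs Vl P i (pub_beh (\<phi>(i:=f))) =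
   (\<Sum>s\<in>snd ` Om. ((g s - f s) * piv n i (\<lambda>j. \<phi> j s)) * (Pr Om P (prof_event Om s) * VdE Om P i (prof_event Om s)))"
proof -
  have "EU n K Vs Vl P i (pub_beh (\<phi>(i:=g))) - EU n K Vs Vl P i (pub_beh (\<phi>(i:=f))) =
     (\<Sum>\<omega>\<in>Om. ((g (snd \<omega>) - f (snd \<omega>)) * piv n i (\<lambda>j. \<phi> j (snd \<omega>))) * (P \<omega> * Vd i \<omega>))"
    unfolding pub_beh_upd EU_diff by (rule sum.cong[OF refl]) (simp add: pub_beh_def)
  also have "\<dots> = (\<Sum>s\<in>snd ` Om. ((g s - f s) * piv n i (\<lambda>j. \<phi> j s)) * (\<Sum>\<omega>\<in>{\<omega>\<in>Om. snd \<omega> = s}. P \<omega> * Vd i \<omega>))"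
    by (rule group_snd[OF finOm, where F = "\<lambda>s. (g s - f s) * piv n i (\<lambda>j. \<phi> j s)"
          and G = "\<lambda>\<omega>. P \<omega> * Vd i \<omega>"])
  also have "\<dots> = (\<Sum>s\<in>snd ` Om. ((g s - f s) * piv n i (\<lambda>j. \<phi> j s)) * (Pr Om P (prof_event Om s) * VdE Om P i (prof_event Om s)))"
    by (rule sum.cong[OF refl]) (simp only: prof_inter[symmetric] sum_PVd[OF finOm Pnn])
  finally show ?thesis .
qed

lemma piv_pub:
  assumes iV: "i \<in> voters n" and v: "valid_pub_profile n K \<phi>" and s: "s \<in> profiles n K"
  shows "0 \<le> piv n i (\<lambda>j. \<phi> j s)"
  apply (rule piv_nonneg[OF iV])
  using v s unfolding valid_pub_profile_def valid_pub_strategy_def by blast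

lemma term_nonneg:
  assumes "0 \<le> g s" "g s \<le> 1" "0 \<le> p"
  shows "0 \<le> ((phs i s - g s) * p) * (Pr Om P (prof_event Om s) * VdE Om P i (prof_event Om s))"
proof (cases "VdE Om P i (prof_event Om s) > 0")
  case True
  thus ?thesis using assms Pr_nonneg[of "prof_event Om s"] by (simp add: phs_def)
next
  case False
  hence "Pr Om P (prof_event Om s) * VdE Om P i (prof_event Om s) \<le> 0"
    using Pr_nonneg[of "prof_event Om s"] by (simp add: mult_nonneg_nonpos)
  moreover have "(phs i s - g s) * p \<le> 0" using False assms by (simp add: phs_def mult_nonpos_nonneg)
  ultimately show ?thesis by (simp add: mult_nonpos_nonpos)
qed

lemma sincere_best:
  assumes iV: "i \<in> voters n" and v: "valid_pub_profile n K \<phi>" and g: "valid_pub_strategy n K g"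
  shows "EU n K Vs Vl P i (pub_beh (\<phi>(i:=g))) \<le> EU n K Vs Vl P i (pub_beh (\<phi>(i:=phs i)))"
proof -
  have "0 \<le> EU n K Vs Vl P i (pub_beh (\<phi>(i:=phs i))) - EU n K Vs Vl P i (pub_beh (\<phi>(i:=g)))"
    unfolding EU_pub_diff
  proof (rule sum_nonneg)
    fix s assume "s \<in> snd ` Om"
    hence s: "s \<in> profiles n K" using Om_mem by auto
    show "0 \<le> ((phs i s - g s) * piv n i (\<lambda>j. \<phi> j s)) * (Pr Om P (prof_event Om s) * VdE Om P i (prof_event Om s))"
      using term_nonneg g s piv_pub[OF iV v s] unfolding valid_pub_strategy_def by blast
  qed
  thus ?thesis by simp
qed

lemma pub_exists: "equilibrium_pub n K Vs Vl P phs"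
  unfolding equilibrium_pub_def BNE_pub_def
proof (intro conjI ballI allI impI)
  show "valid_pub_profile n K phs" by (rule phs_valid)
  fix i assume iV: "i \<in> voters n"
  {
    fix f assume "valid_pub_strategy n K f"
    thus "EU n K Vs Vl P i (pub_beh (phs(i := f))) \<le> EU n K Vs Vl P i (pub_beh phs)"
      using sincere_best[OF iV phs_valid] by simp
  }
  show "\<not> weakly_dominated_pub n K Vs Vl P i (phs i)"
    unfolding weakly_dominated_pub_def using sincere_best[OF iV] by (simp add: not_less)
qed

lemma pub_unique:
  assumes eq: "equilibrium_pub n K Vs Vl P \<psi>" and iV: "i \<in> voters n" and s: "s \<in> profiles n K"
    and pos: "Pr Om P (prof_event Om s) > 0"
  shows "\<psi> i s = phs i s"
proof (rule ccontr)
  assume ne: "\<psi> i s \<noteq> phs i s"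
  have vpsi: "valid_pub_profile n K \<psi>" using eq by (simp add: equilibrium_pub_def BNE_pub_def)
  hence vi: "valid_pub_strategy n K (\<psi> i)" using iV by (simp add: valid_pub_profile_def)
  have nd: "\<not> weakly_dominated_pub n K Vs Vl P i (\<psi> i)" using eq iV by (simp add: equilibrium_pub_def)
  have "tau n \<le> card (voters n - {i})" using iV n3 by (simp add: voters_def tau_def)
  then obtain T where T: "T \<subseteq> voters n - {i}" "card T = tau n" "finite T"
    by (rule obtain_subset_with_card_n)
  define \<phi>T where "\<phi>T = (\<lambda>(j::nat) (s::nat \<Rightarrow> nat). if j \<in> T then (1::real) else 0)"
  have vT: "valid_pub_profile n K \<phi>T" by (auto simp: valid_pub_profile_def valid_pub_strategy_def \<phi>T_def)
  have piv1: "piv n i (\<lambda>j. \<phi>T j s') = 1" for s'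
  proof -
    have e1: "(\<lambda>j. \<phi>T j s')(i := 1) = (\<lambda>j. if j \<in> insert i T then 1 else 0)" by (intro ext) (auto simp: \<phi>T_def)
    have e0: "(\<lambda>j. \<phi>T j s')(i := 0) = (\<lambda>j. if j \<in> T then 1 else 0)" using T by (intro ext) (auto simp: \<phi>T_def)
    have "i \<notin> T" using T by auto
    hence c: "card (insert i T) = tau n + 1" using T by simp
    have "insert i T \<subseteq> voters n" using T iV by auto
    hence "win_prob n (\<lambda>j. if j \<in> insert i T then 1 else 0) = 1" using win_prob_indicator[of "insert i T" n] c by (simp only:) simp
    moreover have "win_prob n (\<lambda>j. if j \<in> T then 1 else 0) = 0" using win_prob_indicator[of T n] T by auto
    ultimately show ?thesis unfolding piv_def e1 e0 by simp
  qed
  have "s \<in> snd ` Om"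
  proof (rule ccontr)
    assume "s \<notin> snd ` Om"
    hence "prof_event Om s \<inter> Om = {}" by (auto simp: prof_event_def)
    thus False using pos by (simp add: Pr_def)
  qed
  have "0 < EU n K Vs Vl P i (pub_beh (\<phi>T(i:=phs i))) - EU n K Vs Vl P i (pub_beh (\<phi>T(i:=\<psi> i)))"
    unfolding EU_pub_diff piv1
  proof (rule sum_pos2[OF finOm[THEN finite_imageI] \<open>s \<in> snd ` Om\<close>])
    fix s' assume "s' \<in> snd ` Om"
    hence s': "s' \<in> profiles n K" using Om_mem by auto
    show "0 \<le> ((phs i s' - \<psi> i s') * 1) * (Pr Om P (prof_event Om s') * VdE Om P i (prof_event Om s'))"
      using term_nonneg[where g="\<psi> i" and s=s' and p=1 and i=i] vi s' unfolding valid_pub_strategy_def by simp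
  next
    have nz: "VdE Om P i (prof_event Om s) \<noteq> 0" using NZ[OF iV _ pos] by (auto simp: prof_event_def)
    have ps: "0 \<le> \<psi> i s" "\<psi> i s \<le> 1" using vi s unfolding valid_pub_strategy_def by auto
    show "0 < ((phs i s - \<psi> i s) * 1) * (Pr Om P (prof_event Om s) * VdE Om P i (prof_event Om s))"
    proof (cases "VdE Om P i (prof_event Om s) > 0")
      case True
      hence "phs i s = 1" by (simp add: phs_def)
      hence "phs i s - \<psi> i s > 0" using ne ps by simp
      thus ?thesis using True pos by simp
    next
      case False
      hence neg: "VdE Om P i (prof_event Om s) < 0" using nz by simp
      hence "phs i s = 0" by (simp add: phs_def)
      hence "phs i s - \<psi> i s < 0" using ne ps by simp
      moreover have "Pr Om P (prof_event Om s) * VdE Om P i (prof_event Om s) < 0"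
        using neg pos by (simp add: mult_pos_neg)
      ultimately show ?thesis by (simp add: mult_neg_neg)
    qed
  qed
  hence "weakly_dominated_pub n K Vs Vl P i (\<psi> i)"
    unfolding weakly_dominated_pub_def
    using phs_valid iV sincere_best[OF iV _ vi] vT
    by (intro exI[of _ "phs i"] conjI allI impI exI[of _ \<phi>T])
       (auto simp: valid_pub_profile_def)
  thus False using nd by simp
qed

end

theorem proposition1:
  fixes n K :: nat and Vs Vl :: "real set" and P :: "state \<Rightarrow> real"
  assumes "standing_assumptions n K Vs Vl P"
  shows "(\<exists>\<sigma>. equilibrium_priv n K Vs Vl P \<sigma>)
       \<and> (\<exists>\<phi>. equilibrium_pub n K Vs Vl P \<phi> \<and>
            (\<forall>\<psi>. equilibrium_pub n K Vs Vl P \<psi> \<longrightarrow>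
               (\<forall>i\<in>voters n. \<forall>s\<in>profiles n K.
                  Pr (Omega n K Vs Vl) P (prof_event (Omega n K Vs Vl) s) > 0 \<longrightarrow>
                  \<psi> i s = \<phi> i s)))"
proof -
  interpret SA n K Vs Vl P by (rule SA.intro[OF assms])
  show ?thesis
    using priv_exists pub_exists pub_unique by blast
qed

end
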